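(* Let $\mathcal{H}$ be a finite set of hypotheses with a prior probability distribution $P$, $\mathcal{T}$ a finite set of tests, $\mathcal{O}$ a finite set of outcomes, each $h\in\mathcal{H}$ a function $h:\mathcal{T}\to\mathcal{O}$, and $\mathcal{R}$ a finite collection of decision regions $r\subseteq\mathcal{H}$ with $\bigcup_{r\in\mathcal{R}} r=\mathcal{H}$. Let $\mathcal{G}$, $k$, $\mathcal{E}$ and $f_{\mathrm{HEC}}$ be as defined in the context. Then $f_{\mathrm{HEC}}$ is strongly adaptive monotone and adaptive submodular, i.e.: (i) for every $\mathcal{S}\subseteq\mathcal{T}\times\mathcal{O}$, every $t\in\mathcal{T}$ and every $h\in\mathcal{H}$, $f_{\mathrm{HEC}}(\mathcal{S}\cup\{(t,h(t))\})-f_{\mathrm{HEC}}(\mathcal{S})\ge 0$; (ii) for all $\mathcal{S}\subseteq\mathcal{S}'\subseteq\mathcal{T}\times\mathcal{O}$ with $P(\mathcal{V}(\mathcal{S}'))>0$ and every test $t\in\mathcal{T}$, $\Delta(t\mid\mathcal{S})\ge\Delta(t\mid\mathcal{S}')$.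
   Context: Subregions: hypotheses are grouped into the same subregion iff they belong to exactly the same decision regions; $\mathcal{G}$ is the set of these classes, and $g\subseteq r$ means every hypothesis of $g$ lies in $r$. Set $k=\min\big(\max_{h\in\mathcal{H}}|\{r: h\in r\}|,\ \max_{r\in\mathcal{R}}|\{g\in\mathcal{G}: g\subseteq r\}|\big)+1$. $\mathcal{E}$ is the set of all multisets $e$ of exactly $k$ subregions (repetitions allowed) such that no $r\in\mathcal{R}$ satisfies $g\subseteq r$ for all $g\in e$. For $\mathcal{S}\subseteq\mathcal{T}\times\mathcal{O}$ let $\mathcal{V}(\mathcal{S})=\{h: h(t)=o\ \forall (t,o)\in\mathcal{S}\}$. Define $f_{\mathrm{HEC}}(\mathcal{S})=\sum_{e\in\mathcal{E}}\prod_{g\in e}P(g)-\sum_{e\in\mathcal{E}}\prod_{g\in e}P(g\cap\mathcal{V}(\mathcal{S}))$, where $P(A)=\sum_{h\in A}P(h)$ and products over a multiset count multiplicities. The expected marginal gain of test $t$ given $\mathcal{S}$ with $P(\mathcal{V}(\mathcal{S}))>0$ is $\Delta(t\mid\mathcal{S})=\sum_{h\in\mathcal{V}(\mathcal{S})}\frac{P(h)}{P(\mathcal{V}(\mathcal{S}))}\big(f_{\mathrm{HEC}}(\mathcal{S}\cup\{(t,h(t))\})-f_{\mathrm{HEC}}(\mathcal{S})\big)$. *)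

theory Defs
  imports Complex_Main "HOL-Library.Multiset"
begin

definition prob_of :: "('a \<Rightarrow> real) \<Rightarrow> 'a set \<Rightarrow> real" where
  "prob_of P A = (\<Sum>h\<in>A. P h)"

definition subregions :: "'a set \<Rightarrow> 'a set set \<Rightarrow> 'a set set" where
  "subregions H R = (\<lambda>h. {h'\<in>H. \<forall>r\<in>R. (h \<in> r) = (h' \<in> r)}) ` H"

definition hec_k :: "'a set \<Rightarrow> 'a set set \<Rightarrow> nat" where
  "hec_k H R = min (Max ((\<lambda>h. card {r\<in>R. h \<in> r}) ` H))
                   (Max ((\<lambda>r. card {g\<in>subregions H R. g \<subseteq> r}) ` R)) + 1"

definition hec_edges :: "'a set \<Rightarrow> 'a set set \<Rightarrow> 'a set multiset set" where
  "hec_edges H R = {e. size e = hec_k H R \<and> set_mset e \<subseteq> subregions H R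
                      \<and> \<not> (\<exists>r\<in>R. \<forall>g\<in>#e. g \<subseteq> r)}"

definition version_space :: "('t \<Rightarrow> 'o) set \<Rightarrow> ('t \<times> 'o) set \<Rightarrow> ('t \<Rightarrow> 'o) set" where
  "version_space H S = {h\<in>H. \<forall>(t, v)\<in>S. h t = v}"

definition f_hec :: "('t \<Rightarrow> 'o) set \<Rightarrow> ('t \<Rightarrow> 'o) set set \<Rightarrow> (('t \<Rightarrow> 'o) \<Rightarrow> real)
                     \<Rightarrow> ('t \<times> 'o) set \<Rightarrow> real" where
  "f_hec H R P S =
     (\<Sum>e\<in>hec_edges H R. \<Prod>g\<in>#e. prob_of P g)
   - (\<Sum>e\<in>hec_edges H R. \<Prod>g\<in>#e. prob_of P (g \<inter> version_space H S))"

definition hec_gain :: "('t \<Rightarrow> 'o) set \<Rightarrow> ('t \<Rightarrow> 'o) set set \<Rightarrow> (('t \<Rightarrow> 'o) \<Rightarrow> real)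
                     \<Rightarrow> 't \<Rightarrow> ('t \<times> 'o) set \<Rightarrow> real" where
  "hec_gain H R P t S =
     (\<Sum>h\<in>version_space H S. P h / prob_of P (version_space H S)
        * (f_hec H R P (insert (t, h t) S) - f_hec H R P S))"

end

theory Submission imports Defs begin

lemma pm_nonneg:
  fixes f :: "'a \<Rightarrow> real"
  shows "(\<And>g. g \<in># e \<Longrightarrow> 0 \<le> f g) \<Longrightarrow> 0 \<le> (\<Prod>g\<in>#e. f g)"
  by (induction e) auto

lemma pm_mono:
  fixes f f' :: "'a \<Rightarrow> real"
  shows "(\<And>g. g \<in># e \<Longrightarrow> 0 \<le> f g \<and> f g \<le> f' g) \<Longrightarrow> (\<Prod>g\<in>#e. f g) \<le> (\<Prod>g\<in>#e. f' g)"
proof (induction e)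
  case empty then show ?case by simp
next
  case (add x e)
  have "(\<Prod>g\<in>#e. f g) \<le> (\<Prod>g\<in>#e. f' g)" using add by auto
  moreover have "0 \<le> (\<Prod>g\<in>#e. f g)" by (rule pm_nonneg) (use add.prems in auto)
  moreover have "0 \<le> f x" "f x \<le> f' x" using add.prems by auto
  ultimately show ?case by (simp add: mult_mono)
qed

lemma pm_diff_mono:
  fixes a b d :: "'a \<Rightarrow> real"
  shows "(\<And>g. g \<in># e \<Longrightarrow> 0 \<le> a g \<and> a g \<le> b g \<and> 0 \<le> d g) \<Longrightarrow>
    0 \<le> (\<Prod>g\<in>#e. a g + d g) - (\<Prod>g\<in>#e. a g) \<and>
    (\<Prod>g\<in>#e. a g + d g) - (\<Prod>g\<in>#e. a g) \<le> (\<Prod>g\<in>#e. b g + d g) - (\<Prod>g\<in>#e. b g)"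
proof (induction e)
  case empty then show ?case by simp
next
  case (add x e)
  let ?A = "(\<Prod>g\<in>#e. a g + d g)" and ?a = "(\<Prod>g\<in>#e. a g)"
  let ?B = "(\<Prod>g\<in>#e. b g + d g)" and ?b = "(\<Prod>g\<in>#e. b g)"
  have IH: "0 \<le> ?A - ?a" "?A - ?a \<le> ?B - ?b" using add by auto
  have AB: "?A \<le> ?B" by (rule pm_mono) (use add.prems in auto)
  have A0: "0 \<le> ?A" by (rule pm_nonneg) (use add.prems in auto)
  have x: "0 \<le> a x" "a x \<le> b x" "0 \<le> d x" using add.prems by auto
  have e1: "(a x + d x) * ?A - a x * ?a = a x * (?A - ?a) + d x * ?A" by (simp add: algebra_simps)
  have e2: "(b x + d x) * ?B - b x * ?b = b x * (?B - ?b) + d x * ?B" by (simp add: algebra_simps)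
  have "a x * (?A - ?a) \<le> b x * (?B - ?b)" using IH x by (meson mult_mono order_trans)
  moreover have "d x * ?A \<le> d x * ?B" using AB x by (simp add: mult_left_mono)
  ultimately show ?case using e1 e2 IH x A0 by simp
qed

lemma pm_diff_ge:
  fixes a d :: "'a \<Rightarrow> real"
  assumes "g0 \<in># e" "\<And>g. g \<in># e \<Longrightarrow> 0 \<le> a g \<and> 0 \<le> d g" "d g0 = c"
  shows "c * (\<Prod>g\<in>#e - {#g0#}. a g) \<le> (\<Prod>g\<in>#e. a g + d g) - (\<Prod>g\<in>#e. a g)"
proof -
  obtain e' where e: "e = add_mset g0 e'" using assms(1) by (metis mset_add)
  have m: "(\<Prod>g\<in>#e'. a g) \<le> (\<Prod>g\<in>#e'. a g + d g)" by (rule pm_mono) (use assms(2) e in auto)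
  have "0 \<le> a g0 + c" using assms e by auto
  then have "(a g0 + c) * (\<Prod>g\<in>#e'. a g) \<le> (a g0 + c) * (\<Prod>g\<in>#e'. a g + d g)"
    using m by (simp add: mult_left_mono)
  then show ?thesis using e assms(3) by (simp add: algebra_simps)
qed

locale hecs =
  fixes H :: "'a set" and R :: "'a set set" and P :: "'a \<Rightarrow> real"
  assumes finH: "finite H" and Pnn: "\<forall>h\<in>H. 0 \<le> P h" and finR: "finite R"
    and Rsub: "\<forall>r\<in>R. r \<subseteq> H" and UR: "\<Union>R = H" and Hne: "H \<noteq> {}"
begin

definition cls where "cls h = {h'\<in>H. \<forall>r\<in>R. (h\<in>r) = (h'\<in>r)}"
abbreviation G where "G \<equiv> subregions H R"
abbreviation E where "E \<equiv> hec_edges H R"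
abbreviation k where "k \<equiv> hec_k H R"

lemma G_eq: "G = cls ` H"
  by (simp add: subregions_def cls_def[abs_def])

lemma finG: "finite G" using finH G_eq by simp

lemma G_sub: "g \<in> G \<Longrightarrow> g \<subseteq> H" using G_eq cls_def by auto

lemma mem_cls: "h \<in> H \<Longrightarrow> h \<in> cls h" by (simp add: cls_def)

lemma cls_eq: "x \<in> cls h \<Longrightarrow> cls x = cls h"
  unfolding cls_def by auto

lemma G_disj: "g1 \<in> G \<Longrightarrow> g2 \<in> G \<Longrightarrow> x \<in> g1 \<Longrightarrow> x \<in> g2 \<Longrightarrow> g1 = g2"
  using G_eq cls_eq by (metis imageE)

lemma cls_sub_iff: "h \<in> H \<Longrightarrow> r \<in> R \<Longrightarrow> cls h \<subseteq> r \<longleftrightarrow> h \<in> r"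
  unfolding cls_def by auto

lemma finE: "finite E"
proof -
  have "E \<subseteq> multisets_of_size G k" by (auto simp: hec_edges_def multisets_of_size_def)
  then show ?thesis using finG finite_multisets_of_size finite_subset by blast
qed

lemma exch:
  assumes "e \<in> E" "g0 \<in> G"
  shows "\<exists>h\<in>#e. add_mset g0 (e - {#h#}) \<in> E"
proof (cases "g0 \<in># e")
  case True then show ?thesis using assms(1) by (intro bexI[of _ g0]) (auto simp: insert_DiffM)
next
  case False
  from assms have e: "size e = k" "set_mset e \<subseteq> G" "\<not>(\<exists>r\<in>R. \<forall>g\<in>#e. g \<subseteq> r)"
    by (auto simp: hec_edges_def)
  show ?thesis
  proof (rule ccontr)
    assume nt: "\<not> ?thesis"
    have "\<forall>h\<in>#e. \<exists>r\<in>R. \<forall>g\<in>#add_mset g0 (e - {#h#}). g \<subseteq> r"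
    proof
      fix h assume h: "h \<in># e"
      have "size e \<noteq> 0" using h by auto
      then have "size (add_mset g0 (e - {#h#})) = k" using h e(1)
        by (simp add: size_Diff_singleton)
      moreover have "set_mset (add_mset g0 (e - {#h#})) \<subseteq> G"
        using e(2) assms(2) by (auto dest: in_diffD)
      ultimately show "\<exists>r\<in>R. \<forall>g\<in>#add_mset g0 (e - {#h#}). g \<subseteq> r"
        using nt h by (auto simp: hec_edges_def)
    qed
    then obtain rr where rr: "\<And>h. h \<in># e \<Longrightarrow> rr h \<in> R \<and> (\<forall>g\<in>#add_mset g0 (e - {#h#}). g \<subseteq> rr h)"
      by metis
    have cnt: "count e h = 1" if h: "h \<in># e" for h
    proof (rule ccontr)
      assume "count e h \<noteq> 1"
      moreover have "count e h > 0" using h by simp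
      ultimately have c2: "count e h \<ge> 2" by linarith
      have "\<forall>g\<in>#e. g \<subseteq> rr h"
      proof
        fix g assume g: "g \<in># e"
        have "count (e - {#h#}) g \<ge> 1" using c2 g by (cases "g = h") auto
        then have "g \<in># e - {#h#}" using count_greater_zero_iff[of "e - {#h#}" g] by linarith
        then show "g \<subseteq> rr h" using rr[OF h] by auto
      qed
      then show False using e(3) rr[OF h] by blast
    qed
    define D where "D = set_mset e"
    have cardD: "card D = k"
    proof -
      have "size e = sum (count e) D" unfolding D_def by (rule size_multiset_overloaded_eq)
      also have "\<dots> = sum (\<lambda>_. 1) D" using cnt unfolding D_def by (intro sum.cong) auto
      finally show ?thesis using e(1) by simp
    qed
    have inj: "inj_on rr D"
    proof (rule inj_onI, rule ccontr)
      fix h1 h2 assume h: "h1 \<in> D" "h2 \<in> D" "rr h1 = rr h2" "h1 \<noteq> h2"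
      have "\<forall>g\<in>#e. g \<subseteq> rr h1"
      proof
        fix g assume g: "g \<in># e"
        show "g \<subseteq> rr h1"
        proof (cases "g = h1")
          case True
          then have "g \<in># e - {#h2#}" using g h(4) by (simp add: in_diff_count)
          then show ?thesis using rr[of h2] h unfolding D_def by auto
        next
          case False
          then have "g \<in># e - {#h1#}" using g by (simp add: in_diff_count)
          then show ?thesis using rr[of h1] h unfolding D_def by auto
        qed
      qed
      then show False using e(3) rr[of h1] h(1) unfolding D_def by blast
    qed
    obtain h0 where h0: "h0 \<in> H" "g0 = cls h0" using assms(2) G_eq by auto
    have rrg0: "g0 \<subseteq> rr h" if "h \<in> D" for h using rr[of h] that unfolding D_def by auto
    define a where "a = Max ((\<lambda>h. card {r\<in>R. h \<in> r}) ` H)"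
    define b where "b = Max ((\<lambda>r. card {g\<in>G. g \<subseteq> r}) ` R)"
    have kab: "k = min a b + 1" unfolding a_def b_def hec_k_def by simp
    show False
    proof (cases "a \<le> b")
      case True
      have sub: "rr ` D \<subseteq> {r\<in>R. h0 \<in> r}"
        using rr rrg0 h0 mem_cls unfolding D_def by auto
      have ck: "card (rr ` D) = k" using card_image[OF inj] cardD by simp
      have "finite {r\<in>R. h0 \<in> r}" using finR by simp
      then have "card (rr ` D) \<le> card {r\<in>R. h0 \<in> r}" using sub by (rule card_mono)
      then have "k \<le> card {r\<in>R. h0 \<in> r}" using ck by simp
      also have "\<dots> \<le> a" unfolding a_def using finH h0(1) by (intro Max_ge) auto
      finally show False using kab True by simp
    next
      case False
      have "D \<noteq> {}" using cardD kab by auto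
      then obtain h1 where h1: "h1 \<in> D" by auto
      have g0D: "g0 \<notin> D" using \<open>g0 \<notin># e\<close> unfolding D_def by simp
      have sub: "insert g0 (D - {h1}) \<subseteq> {g\<in>G. g \<subseteq> rr h1}"
      proof
        fix g assume g: "g \<in> insert g0 (D - {h1})"
        show "g \<in> {g\<in>G. g \<subseteq> rr h1}"
        proof (cases "g = g0")
          case True then show ?thesis using assms(2) rrg0[OF h1] by simp
        next
          case False
          then have "g \<in> D" "g \<noteq> h1" using g by auto
          then have "g \<in># e - {#h1#}" unfolding D_def by (simp add: in_diff_count)
          then show ?thesis using rr[of h1] h1 e(2) \<open>g \<in> D\<close> unfolding D_def by auto
        qed
      qed
      have finD: "finite D" unfolding D_def by simp
      have "card D \<noteq> 0" using h1 finD by auto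
      then have ck: "card (insert g0 (D - {h1})) = k" using g0D h1 finD cardD
        by (simp add: card_Diff_singleton)
      have "finite {g\<in>G. g \<subseteq> rr h1}" using finG by simp
      then have "card (insert g0 (D - {h1})) \<le> card {g\<in>G. g \<subseteq> rr h1}" using sub
        by (rule card_mono)
      then have "k \<le> card {g\<in>G. g \<subseteq> rr h1}" using ck by simp
      also have "card {g\<in>G. g \<subseteq> rr h1} \<le> b" unfolding b_def using finR rr[of h1] h1 unfolding D_def by (intro Max_ge) auto
      finally show False using kab False by simp
    qed
  qed
qed


definition w where "w U g = prob_of P (g \<inter> U)"
definition FF where "FF U = (\<Sum>e\<in>E. \<Prod>g\<in>#e. w U g)"
definition Dg where "Dg U g0 = (\<Sum>e\<in>E. if g0 \<in># e then (\<Prod>g\<in>#e - {#g0#}. w U g) else 0)"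

lemma E_G: "e \<in> E \<Longrightarrow> g \<in># e \<Longrightarrow> g \<in> G"
  by (auto simp: hec_edges_def)

lemma prob_nonneg: "U \<subseteq> H \<Longrightarrow> 0 \<le> prob_of P U"
  unfolding prob_of_def using Pnn by (auto intro: sum_nonneg)

lemma prob_mono: "U \<subseteq> V \<Longrightarrow> V \<subseteq> H \<Longrightarrow> prob_of P U \<le> prob_of P V"
  unfolding prob_of_def using Pnn finH by (intro sum_mono2) (auto intro: finite_subset)

lemma prob_insert: "finite U \<Longrightarrow> h \<notin> U \<Longrightarrow> prob_of P (insert h U) = P h + prob_of P U"
  unfolding prob_of_def by simp

lemma w_nonneg: "g \<in> G \<Longrightarrow> 0 \<le> w U g"
  unfolding w_def using G_sub by (intro prob_nonneg) auto

lemma w_mono: "U \<subseteq> V \<Longrightarrow> g \<in> G \<Longrightarrow> w U g \<le> w V g"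
  unfolding w_def using G_sub by (intro prob_mono) auto

lemma w_insert: "g \<in> G \<Longrightarrow> h0 \<notin> U \<Longrightarrow>
    w (insert h0 U) g = w U g + (if h0 \<in> g then P h0 else 0)"
proof -
  assume g: "g \<in> G" and h0: "h0 \<notin> U"
  have fg: "finite (g \<inter> U)" using G_sub[OF g] finH by (meson finite_Int finite_subset)
  show ?thesis
  proof (cases "h0 \<in> g")
    case True
    then have "g \<inter> insert h0 U = insert h0 (g \<inter> U)" by auto
    then show ?thesis using True fg h0 by (simp add: w_def prob_insert)
  next
    case False
    then have "g \<inter> insert h0 U = g \<inter> U" by auto
    then show ?thesis using False by (simp add: w_def)
  qed
qed

lemma FF_nonneg: "0 \<le> FF U"
  unfolding FF_def by (intro sum_nonneg pm_nonneg w_nonneg) (auto intro: E_G)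

lemma FF_mono: "U \<subseteq> V \<Longrightarrow> FF U \<le> FF V"
  unfolding FF_def by (intro sum_mono pm_mono) (auto intro: w_nonneg w_mono E_G)

lemma pm_insert:
  assumes "e \<in> E" "h0 \<notin> U"
  shows "(\<Prod>g\<in>#e. w (insert h0 U) g) = (\<Prod>g\<in>#e. w U g + (if h0 \<in> g then P h0 else 0))"
proof -
  have "image_mset (w (insert h0 U)) e = image_mset (\<lambda>g. w U g + (if h0 \<in> g then P h0 else 0)) e"
    using assms w_insert[OF E_G[OF assms(1)]] by (intro image_mset_cong) auto
  then show ?thesis by simp
qed

lemma FF_diff_mono:
  assumes "U \<subseteq> V" "h0 \<notin> V"
  shows "0 \<le> FF (insert h0 U) - FF U \<and> FF (insert h0 U) - FF U \<le> FF (insert h0 V) - FF V"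
proof -
  define d where "d g = (if h0 \<in> g then P h0 else 0)" for g
  have dn: "0 \<le> d g" if "g \<in> G" for g using that G_sub Pnn unfolding d_def by auto
  have h0U: "h0 \<notin> U" using assms by auto
  have "FF (insert h0 U) - FF U = (\<Sum>e\<in>E. (\<Prod>g\<in>#e. w U g + d g) - (\<Prod>g\<in>#e. w U g))"
    unfolding FF_def d_def using h0U by (simp add: pm_insert sum_subtractf)
  moreover have "FF (insert h0 V) - FF V = (\<Sum>e\<in>E. (\<Prod>g\<in>#e. w V g + d g) - (\<Prod>g\<in>#e. w V g))"
    unfolding FF_def d_def using assms by (simp add: pm_insert sum_subtractf)
  moreover have ee: "0 \<le> (\<Prod>g\<in>#e. w U g + d g) - (\<Prod>g\<in>#e. w U g) \<and>
    (\<Prod>g\<in>#e. w U g + d g) - (\<Prod>g\<in>#e. w U g) \<le> (\<Prod>g\<in>#e. w V g + d g) - (\<Prod>g\<in>#e. w V g)"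
    if e: "e \<in> E" for e
  proof (rule pm_diff_mono)
    fix g assume "g \<in># e"
    then have g: "g \<in> G" using e E_G by blast
    show "0 \<le> w U g \<and> w U g \<le> w V g \<and> 0 \<le> d g" using w_nonneg[OF g] w_mono[OF assms(1) g] dn[OF g] by simp
  qed
  moreover have "0 \<le> (\<Sum>e\<in>E. (\<Prod>g\<in>#e. w U g + d g) - (\<Prod>g\<in>#e. w U g))"
    using ee by (intro sum_nonneg) blast
  moreover have "(\<Sum>e\<in>E. (\<Prod>g\<in>#e. w U g + d g) - (\<Prod>g\<in>#e. w U g))
     \<le> (\<Sum>e\<in>E. (\<Prod>g\<in>#e. w V g + d g) - (\<Prod>g\<in>#e. w V g))"
    using ee by (intro sum_mono) blast
  ultimately show ?thesis by simp
qed

lemma FF_diff_ge: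
  assumes "h0 \<in> H" "h0 \<notin> U"
  shows "P h0 * Dg U (cls h0) \<le> FF (insert h0 U) - FF U"
proof -
  define d where "d g = (if h0 \<in> g then P h0 else 0)" for g
  have dn: "0 \<le> d g" if "g \<in> G" for g using that G_sub Pnn unfolding d_def by auto
  have "FF (insert h0 U) - FF U = (\<Sum>e\<in>E. (\<Prod>g\<in>#e. w U g + d g) - (\<Prod>g\<in>#e. w U g))"
    unfolding FF_def d_def using assms by (simp add: pm_insert sum_subtractf)
  moreover have "P h0 * Dg U (cls h0) = (\<Sum>e\<in>E. P h0 * (if cls h0 \<in># e then (\<Prod>g\<in>#e - {#cls h0#}. w U g) else 0))"
    unfolding Dg_def by (simp add: sum_distrib_left)
  moreover have "P h0 * (if cls h0 \<in># e then (\<Prod>g\<in>#e - {#cls h0#}. w U g) else 0)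
      \<le> (\<Prod>g\<in>#e. w U g + d g) - (\<Prod>g\<in>#e. w U g)" if e: "e \<in> E" for e
  proof (cases "cls h0 \<in># e")
    case True
    have "d (cls h0) = P h0" using assms mem_cls unfolding d_def by auto
    then show ?thesis using True e by (simp, intro pm_diff_ge) (auto intro: w_nonneg dn E_G)
  next
    case False
    have "0 \<le> (\<Prod>g\<in>#e. w U g + d g) - (\<Prod>g\<in>#e. w U g)"
      using pm_diff_mono[of e "w U" "w U" d] e by (auto intro: w_nonneg dn E_G)
    then show ?thesis using False by simp
  qed
  ultimately show ?thesis by (simp add: sum_mono)
qed

lemma sum_w: "U \<subseteq> H \<Longrightarrow> (\<Sum>g\<in>G. w U g) = prob_of P U"
proof -
  assume U: "U \<subseteq> H"
  have "(\<Union>g\<in>G. g \<inter> U) = U" using U mem_cls G_eq by auto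
  moreover have "sum P (\<Union>g\<in>G. g \<inter> U) = (\<Sum>g\<in>G. sum P (g \<inter> U))"
  proof (rule sum.UNION_disjoint)
    show "finite G" by (rule finG)
    show "\<forall>g\<in>G. finite (g \<inter> U)" using G_sub finH by (meson finite_Int finite_subset)
    show "\<forall>i\<in>G. \<forall>j\<in>G. i \<noteq> j \<longrightarrow> i \<inter> U \<inter> (j \<inter> U) = {}" using G_disj by blast
  qed
  ultimately show ?thesis unfolding w_def prob_of_def by simp
qed

lemma L2:
  assumes U: "U \<subseteq> H" and g0: "g0 \<in> G"
  shows "FF U \<le> prob_of P U * Dg U g0"
proof -
  define E' where "E' = {e\<in>E. g0 \<in># e}"
  define F where "F x = w U (snd x) * (\<Prod>g\<in>#fst x - {#g0#}. w U g)" for x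
  define ch where "ch e = (SOME h. h \<in># e \<and> add_mset g0 (e - {#h#}) \<in> E)" for e
  have ch: "ch e \<in># e \<and> add_mset g0 (e - {#ch e#}) \<in> E" if "e \<in> E" for e
    using exch[OF that g0] unfolding ch_def by (metis (mono_tags, lifting) someI_ex)
  define phi where "phi e = (add_mset g0 (e - {#ch e#}), ch e)" for e
  have phiback: "add_mset (snd (phi e)) (fst (phi e) - {#g0#}) = e" if "e \<in> E" for e
    using ch[OF that] unfolding phi_def by (simp add: insert_DiffM)
  have inj: "inj_on phi E" by (rule inj_on_inverseI[where g = "\<lambda>x. add_mset (snd x) (fst x - {#g0#})"]) (rule phiback)
  have img: "phi ` E \<subseteq> E' \<times> G" using ch E_G unfolding phi_def E'_def by auto
  have Fn: "0 \<le> F x" if "x \<in> E' \<times> G" for x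
    using that unfolding F_def E'_def
    by (auto intro!: mult_nonneg_nonneg w_nonneg pm_nonneg) (meson E_G in_diffD)
  have finE': "finite E'" using finE unfolding E'_def by simp
  have "FF U = (\<Sum>e\<in>E. F (phi e))"
    unfolding FF_def
  proof (rule sum.cong)
    fix e assume e: "e \<in> E"
    have "(\<Prod>g\<in>#e. w U g) = (\<Prod>g\<in>#add_mset (snd (phi e)) (fst (phi e) - {#g0#}). w U g)"
      using phiback[OF e] by simp
    also have "\<dots> = F (phi e)" unfolding F_def by simp
    finally show "(\<Prod>g\<in>#e. w U g) = F (phi e)" .
  qed simp
  also have "\<dots> = (\<Sum>x\<in>phi ` E. F x)" using sum.reindex[OF inj, of F] by (simp add: comp_def)
  also have "\<dots> \<le> (\<Sum>x\<in>E' \<times> G. F x)" using img Fn finE' finG by (intro sum_mono2) auto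
  also have "\<dots> = (\<Sum>e\<in>E'. \<Sum>h\<in>G. w U h * (\<Prod>g\<in>#e - {#g0#}. w U g))"
    unfolding F_def by (simp add: sum.cartesian_product split_beta)
  also have "\<dots> = (\<Sum>h\<in>G. w U h) * (\<Sum>e\<in>E'. (\<Prod>g\<in>#e - {#g0#}. w U g))"
    by (simp only: sum_distrib_right[symmetric] sum_distrib_left[symmetric])
  also have "(\<Sum>e\<in>E'. (\<Prod>g\<in>#e - {#g0#}. w U g)) = Dg U g0"
    unfolding Dg_def E'_def using finE by (simp add: sum.inter_filter)
  finally show ?thesis using sum_w[OF U] by simp
qed


lemma KL:
  assumes h0: "h0 \<in> W" and WV: "W \<subseteq> V" and VH: "V \<subseteq> H"
  shows "P h0 * FF W \<le> prob_of P V * (FF V - FF (V - {h0}))"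
proof -
  define W1 where "W1 = W - {h0}"
  define V1 where "V1 = V - {h0}"
  have h0H: "h0 \<in> H" using assms by auto
  have c0: "0 \<le> P h0" using h0H Pnn by auto
  have iW: "insert h0 W1 = W" and iV: "insert h0 V1 = V" using h0 WV unfolding W1_def V1_def by auto
  have dm: "0 \<le> FF (insert h0 W1) - FF W1 \<and> FF (insert h0 W1) - FF W1 \<le> FF (insert h0 V1) - FF V1"
    using WV unfolding W1_def V1_def by (intro FF_diff_mono) auto
  then have d1: "0 \<le> FF W - FF W1" and d2: "FF W - FF W1 \<le> FF V - FF V1" using iW iV by auto
  have ge: "P h0 * Dg W1 (cls h0) \<le> FF W - FF W1"
    using FF_diff_ge[OF h0H, of W1] iW unfolding W1_def by auto
  have W1H: "W1 \<subseteq> H" using WV VH unfolding W1_def by auto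
  have l2: "FF W1 \<le> prob_of P W1 * Dg W1 (cls h0)"
    using L2[OF W1H] G_eq h0H by auto
  have finW1: "finite W1" using W1H finH finite_subset by blast
  have pW: "prob_of P W = P h0 + prob_of P W1"
    using prob_insert[OF finW1, of h0] iW unfolding W1_def by auto
  have pW1: "0 \<le> prob_of P W1" using prob_nonneg[OF W1H] .
  have pWV: "prob_of P W \<le> prob_of P V" using prob_mono[OF WV VH] .
  have "P h0 * FF W1 \<le> P h0 * (prob_of P W1 * Dg W1 (cls h0))"
    using l2 c0 by (rule mult_left_mono)
  also have "\<dots> = prob_of P W1 * (P h0 * Dg W1 (cls h0))" by simp
  also have "\<dots> \<le> prob_of P W1 * (FF W - FF W1)" using ge pW1 by (rule mult_left_mono)
  finally have s1: "P h0 * FF W1 \<le> prob_of P W1 * (FF W - FF W1)" .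
  have "P h0 * FF W = P h0 * FF W1 + P h0 * (FF W - FF W1)" by (simp add: algebra_simps)
  also have "\<dots> \<le> prob_of P W1 * (FF W - FF W1) + P h0 * (FF W - FF W1)" using s1 by simp
  also have "\<dots> = prob_of P W * (FF W - FF W1)" using pW by (simp add: algebra_simps)
  also have "\<dots> \<le> prob_of P V * (FF W - FF W1)" using pWV d1 by (rule mult_right_mono)
  also have "\<dots> \<le> prob_of P V * (FF V - FF V1)"
    using d2 prob_nonneg[OF VH] by (rule mult_left_mono)
  finally show ?thesis unfolding V1_def .
qed

definition Q where "Q lab V = (\<Sum>h\<in>V. P h * FF (V \<inter> {x. lab x = lab h}))"
definition gainV where "gainV lab V = FF V - Q lab V / prob_of P V"

lemma one_step:
  assumes h0: "h0 \<in> V" and VH: "V \<subseteq> H" and pos: "0 < prob_of P (V - {h0})"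
  shows "gainV lab (V - {h0}) \<le> gainV lab V"
proof -
  define C0 where "C0 = {x. lab x = lab h0}"
  define V1 where "V1 = V - {h0}"
  define c where "c = P h0"
  define p where "p = prob_of P V"
  define p1 where "p1 = prob_of P V1"
  define p0 where "p0 = prob_of P (V \<inter> C0)"
  define M where "M = FF (V \<inter> C0)"
  define A where "A = FF V - FF V1"
  define B where "B = M - FF (V1 \<inter> C0)"
  define QV where "QV = Q lab V"
  define Q1 where "Q1 = Q lab V1"
  have finV: "finite V" using VH finH finite_subset by blast
  have finV1: "finite V1" using finV unfolding V1_def by simp
  have V1H: "V1 \<subseteq> H" using VH unfolding V1_def by auto
  have c0: "0 \<le> c" using h0 VH Pnn unfolding c_def by auto
  have p1pos: "0 < p1" using pos unfolding p1_def V1_def .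
  have pp1: "p = c + p1" unfolding p_def p1_def c_def V1_def
    using prob_insert[of "V - {h0}" h0] finV h0 by (simp add: insert_absorb)
  have h0C: "h0 \<in> V \<inter> C0" using h0 unfolding C0_def by simp
  have iC: "insert h0 (V1 \<inter> C0) = V \<inter> C0" using h0 unfolding V1_def C0_def by auto
  have finV1C: "finite (V1 \<inter> C0)" using finV1 by simp
  have pC: "p0 = c + prob_of P (V1 \<inter> C0)" unfolding p0_def c_def
    using prob_insert[OF finV1C, of h0] iC unfolding V1_def by auto
  have p0p: "p0 \<le> p" unfolding p0_def p_def using VH by (intro prob_mono) auto
  have pCn: "0 \<le> prob_of P (V1 \<inter> C0)" using V1H by (intro prob_nonneg) auto
  have QVs: "QV = c * M + (\<Sum>h\<in>V1. P h * FF (V \<inter> {x. lab x = lab h}))"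
    unfolding QV_def Q_def c_def M_def C0_def V1_def using sum.remove[OF finV h0] by simp
  have "(\<Sum>h\<in>V1. P h * FF (V \<inter> {x. lab x = lab h})) - Q1
      = (\<Sum>h\<in>V1. P h * (FF (V \<inter> {x. lab x = lab h}) - FF (V1 \<inter> {x. lab x = lab h})))"
    unfolding Q1_def Q_def by (simp add: sum_subtractf algebra_simps)
  also have "\<dots> = (\<Sum>h\<in>V1. if lab h = lab h0 then P h * B else 0)"
  proof (rule sum.cong)
    fix h assume h: "h \<in> V1"
    show "P h * (FF (V \<inter> {x. lab x = lab h}) - FF (V1 \<inter> {x. lab x = lab h}))
        = (if lab h = lab h0 then P h * B else 0)"
    proof (cases "lab h = lab h0")
      case True
      then have "{x. lab x = lab h} = C0" unfolding C0_def by simp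
      then show ?thesis using True unfolding B_def M_def by simp
    next
      case False
      then have "V \<inter> {x. lab x = lab h} = V1 \<inter> {x. lab x = lab h}" unfolding V1_def by auto
      then show ?thesis using False by simp
    qed
  qed simp
  also have "\<dots> = (\<Sum>h\<in>V1 \<inter> C0. P h * B)"
    unfolding C0_def using finV1 by (simp add: sum.inter_filter Int_def)
  also have "\<dots> = prob_of P (V1 \<inter> C0) * B" unfolding prob_of_def by (simp add: sum_distrib_right)
  finally have Q1eq: "Q1 = QV - c * M - (p0 - c) * B" using QVs pC by (simp add: algebra_simps)
  have dm: "0 \<le> FF (insert h0 (V1 \<inter> C0)) - FF (V1 \<inter> C0) \<and>
      FF (insert h0 (V1 \<inter> C0)) - FF (V1 \<inter> C0) \<le> FF (insert h0 V1) - FF V1"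
    by (intro FF_diff_mono) (auto simp: V1_def)
  have iV: "insert h0 V1 = V" using h0 unfolding V1_def by auto
  have B0: "0 \<le> B" and BA: "B \<le> A" using dm iC iV unfolding B_def A_def M_def by auto
  have "p0 * M = (\<Sum>h\<in>V \<inter> C0. P h * FF (V \<inter> {x. lab x = lab h}))"
    unfolding p0_def prob_of_def M_def C0_def by (simp add: sum_distrib_right)
  also have "\<dots> \<le> QV" unfolding QV_def Q_def using finV VH Pnn FF_nonneg
    by (intro sum_mono2) (auto intro!: mult_nonneg_nonneg)
  finally have QVge: "p0 * M \<le> QV" .
  have KLi: "c * M \<le> p * A" unfolding c_def M_def p_def A_def V1_def
    using KL[OF h0C _ VH] by auto
  have ppos: "0 < p" using pp1 c0 p1pos by simp
  have X: "QV * p1 - Q1 * p = - c * QV + p * c * M + p * (p0 - c) * B"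
    unfolding Q1eq using pp1 by (simp add: algebra_simps)
  have t1: "- c * QV \<le> - c * (p0 * M)" using QVge c0 by (simp add: mult_left_mono)
  have "0 \<le> p * (p0 - c)" using ppos pC pCn by simp
  then have t2: "p * (p0 - c) * B \<le> p * (p0 - c) * A" using mult_left_mono[OF BA] by simp
  have t3: "(p - p0) * (c * M) \<le> (p - p0) * (p * A)" using KLi p0p by (simp add: mult_left_mono)
  have "QV * p1 - Q1 * p \<le> A * (p * p1)"
  proof -
    have "QV * p1 - Q1 * p \<le> - c * (p0 * M) + p * c * M + p * (p0 - c) * A" using X t1 t2 by linarith
    also have "\<dots> = (p - p0) * (c * M) + p * (p0 - c) * A" by (simp add: algebra_simps)
    also have "\<dots> \<le> (p - p0) * (p * A) + p * (p0 - c) * A" using t3 by simp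
    also have "\<dots> = A * (p * p1)" using pp1 by (simp add: algebra_simps)
    finally show ?thesis .
  qed
  then have "QV / p - Q1 / p1 \<le> A" using ppos p1pos by (simp add: field_simps)
  then show ?thesis unfolding gainV_def QV_def Q1_def p_def p1_def A_def V1_def by simp
qed

lemma gain_mono:
  assumes "V' \<subseteq> V" "V \<subseteq> H" "0 < prob_of P V'"
  shows "gainV lab V' \<le> gainV lab V"
proof -
  have "\<forall>V. V' \<subseteq> V \<longrightarrow> V \<subseteq> H \<longrightarrow> card (V - V') = n \<longrightarrow> gainV lab V' \<le> gainV lab V" for n
  proof (induction n)
    case 0
    show ?case
    proof (intro allI impI)
      fix V assume V: "V' \<subseteq> V" "V \<subseteq> H" "card (V - V') = 0"
      have "finite (V - V')" using V finH finite_subset by blast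
      then have "V = V'" using V by auto
      then show "gainV lab V' \<le> gainV lab V" by simp
    qed
  next
    case (Suc n)
    show ?case
    proof (intro allI impI)
      fix V assume V: "V' \<subseteq> V" "V \<subseteq> H" "card (V - V') = Suc n"
      then obtain h0 where h0: "h0 \<in> V - V'" by (metis card.empty ex_in_conv nat.distinct(1))
      have fin: "finite (V - V')" using V finH finite_subset by blast
      have "card (V - {h0} - V') = n" using V(3) h0 fin
        by (metis Diff_insert Diff_insert2 card_Diff_singleton diff_Suc_1)
      then have IH: "gainV lab V' \<le> gainV lab (V - {h0})" using Suc.IH[rule_format, of "V - {h0}"] V h0 by blast
      have "prob_of P V' \<le> prob_of P (V - {h0})" using V h0 by (intro prob_mono) auto
      then have "0 < prob_of P (V - {h0})" using assms(3) by simp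
      then have "gainV lab (V - {h0}) \<le> gainV lab V" using one_step h0 V by auto
      then show "gainV lab V' \<le> gainV lab V" using IH by simp
    qed
  qed
  then show ?thesis using assms by blast
qed

end


lemma vs_insert: "version_space H (insert (t, h t) S) = version_space H S \<inter> {x. x t = h t}"
  unfolding version_space_def by auto

lemma vs_mono: "S \<subseteq> S' \<Longrightarrow> version_space H S' \<subseteq> version_space H S"
  unfolding version_space_def by auto

lemma vs_sub: "version_space H S \<subseteq> H"
  unfolding version_space_def by auto

theorem theorem2:
  fixes H :: "('t \<Rightarrow> 'o) set" and T :: "'t set" and Out :: "'o set"
    and R :: "('t \<Rightarrow> 'o) set set" and P :: "('t \<Rightarrow> 'o) \<Rightarrow> real"
  assumes "finite H" and "finite T" and "finite Out"
    and "\<forall>h\<in>H. \<forall>t\<in>T. h t \<in> Out"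
    and "\<forall>h\<in>H. P h \<ge> 0" and "(\<Sum>h\<in>H. P h) = 1"
    and "finite R" and "\<forall>r\<in>R. r \<subseteq> H" and "\<Union>R = H"
  shows "(\<forall>S t h. S \<subseteq> T \<times> Out \<longrightarrow> t \<in> T \<longrightarrow> h \<in> H \<longrightarrow>
            f_hec H R P (insert (t, h t) S) - f_hec H R P S \<ge> 0)
       \<and> (\<forall>S S' t. S \<subseteq> S' \<longrightarrow> S' \<subseteq> T \<times> Out \<longrightarrow> prob_of P (version_space H S') > 0
            \<longrightarrow> t \<in> T \<longrightarrow> hec_gain H R P t S \<ge> hec_gain H R P t S')"
proof -
  have Hne: "H \<noteq> {}" using assms(6) by auto
  interpret hecs H R P using assms Hne by unfold_locales auto
  have feq: "f_hec H R P S = (\<Sum>e\<in>E. \<Prod>g\<in>#e. prob_of P g) - FF (version_space H S)" for S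
    unfolding f_hec_def FF_def w_def by simp
  have geq: "hec_gain H R P t S = gainV (\<lambda>h. h t) (version_space H S)"
    if pos: "0 < prob_of P (version_space H S)" for t S
  proof -
    define V where "V = version_space H S"
    define p where "p = prob_of P V"
    have p0: "p \<noteq> 0" using pos unfolding p_def V_def by simp
    have "hec_gain H R P t S = (\<Sum>h\<in>V. P h / p * (FF V - FF (V \<inter> {x. x t = h t})))"
      unfolding hec_gain_def V_def p_def feq vs_insert by simp
    also have "\<dots> = (\<Sum>h\<in>V. P h * FF V / p - P h * FF (V \<inter> {x. x t = h t}) / p)"
      by (intro sum.cong) (auto simp: algebra_simps)
    also have "\<dots> = (\<Sum>h\<in>V. P h) * FF V / p - (\<Sum>h\<in>V. P h * FF (V \<inter> {x. x t = h t})) / p"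
      by (simp add: sum_subtractf sum_divide_distrib[symmetric] sum_distrib_right)
    also have "\<dots> = gainV (\<lambda>h. h t) V"
      unfolding gainV_def Q_def using p0 unfolding p_def prob_of_def by (simp add: field_simps)
    finally show ?thesis unfolding V_def .
  qed
  show ?thesis
  proof (intro conjI allI impI)
    fix S t h
    have "FF (version_space H (insert (t, h t) S)) \<le> FF (version_space H S)"
      by (intro FF_mono vs_mono) auto
    then show "f_hec H R P (insert (t, h t) S) - f_hec H R P S \<ge> 0" unfolding feq by simp
  next
    fix S S' :: "('t \<times> 'o) set" and t
    assume SS: "S \<subseteq> S'" and pos: "0 < prob_of P (version_space H S')"
    have sub: "version_space H S' \<subseteq> version_space H S" using vs_mono[OF SS] .
    have pos2: "0 < prob_of P (version_space H S)"
      using pos prob_mono[OF sub vs_sub] by simp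
    show "hec_gain H R P t S' \<le> hec_gain H R P t S"
      unfolding geq[OF pos] geq[OF pos2] by (rule gain_mono[OF sub vs_sub pos])
  qed
qed

end
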